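(* For any integers $1\le n<m$, there exists a (connected) graph $G$ with $D(G)=n$ and $\dim(G)=m$.
   Context: All graphs are finite and simple. For a connected graph $G$ with shortest-path distance $d_G$, a set $S\subseteq V(G)$ is resolving if for any two distinct vertices $x,y$ there is $s\in S$ with $d_G(x,s)\neq d_G(y,s)$; the metric dimension $\dim(G)$ is the minimum size of a resolving set. A distinguishing coloring of a graph $G$ is a (not necessarily proper) vertex coloring such that the only automorphism of $G$ mapping every vertex to a vertex of the same color is the identity; the distinguishing number $D(G)$ is the minimum number of colors in a distinguishing coloring of $G$. *)

theory Defs
  imports Main
begin

definition simple_graph :: "'a set \<Rightarrow> ('a \<times> 'a) set \<Rightarrow> bool" where
  "simple_graph V E \<longleftrightarrow> finite V \<and> E \<subseteq> V \<times> V \<and> sym E \<and> irrefl E"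

definition walk :: "'a set \<Rightarrow> ('a \<times> 'a) set \<Rightarrow> 'a list \<Rightarrow> bool" where
  "walk V E xs \<longleftrightarrow> xs \<noteq> [] \<and> set xs \<subseteq> V \<and>
     (\<forall>i. Suc i < length xs \<longrightarrow> (xs ! i, xs ! Suc i) \<in> E)"

definition connected_graph :: "'a set \<Rightarrow> ('a \<times> 'a) set \<Rightarrow> bool" where
  "connected_graph V E \<longleftrightarrow> V \<noteq> {} \<and>
     (\<forall>x\<in>V. \<forall>y\<in>V. \<exists>xs. walk V E xs \<and> hd xs = x \<and> last xs = y)"

definition dist_G :: "'a set \<Rightarrow> ('a \<times> 'a) set \<Rightarrow> 'a \<Rightarrow> 'a \<Rightarrow> nat" where
  "dist_G V E x y = (LEAST k. \<exists>xs. walk V E xs \<and> hd xs = x \<and> last xs = y \<and> length xs = Suc k)"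

definition resolving :: "'a set \<Rightarrow> ('a \<times> 'a) set \<Rightarrow> 'a set \<Rightarrow> bool" where
  "resolving V E S \<longleftrightarrow> S \<subseteq> V \<and>
     (\<forall>x\<in>V. \<forall>y\<in>V. x \<noteq> y \<longrightarrow> (\<exists>s\<in>S. dist_G V E x s \<noteq> dist_G V E y s))"

definition metric_dim :: "'a set \<Rightarrow> ('a \<times> 'a) set \<Rightarrow> nat" where
  "metric_dim V E = (LEAST k. \<exists>S. resolving V E S \<and> card S = k)"

definition automorphism :: "'a set \<Rightarrow> ('a \<times> 'a) set \<Rightarrow> ('a \<Rightarrow> 'a) \<Rightarrow> bool" where
  "automorphism V E f \<longleftrightarrow> bij_betw f V V \<and>
     (\<forall>x\<in>V. \<forall>y\<in>V. (x, y) \<in> E \<longleftrightarrow> (f x, f y) \<in> E)"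

definition distinguishing :: "'a set \<Rightarrow> ('a \<times> 'a) set \<Rightarrow> ('a \<Rightarrow> nat) \<Rightarrow> bool" where
  "distinguishing V E c \<longleftrightarrow>
     (\<forall>f. automorphism V E f \<and> (\<forall>x\<in>V. c (f x) = c x) \<longrightarrow> (\<forall>x\<in>V. f x = x))"

definition distinguishing_number :: "'a set \<Rightarrow> ('a \<times> 'a) set \<Rightarrow> nat" where
  "distinguishing_number V E = (LEAST k. \<exists>c. c ` V \<subseteq> {..<k} \<and> distinguishing V E c)"

end

theory Submission
  imports Defs "HOL-Library.Nat_Bijection"
begin

definition wlk :: "'a set \<Rightarrow> ('a \<times> 'a) set \<Rightarrow> 'a \<Rightarrow> 'a \<Rightarrow> nat \<Rightarrow> bool" where
  "wlk V E x y k \<longleftrightarrow> (\<exists>xs. walk V E xs \<and> hd xs = x \<and> last xs = y \<and> length xs = Suc k)"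

lemma walk_cons2: "walk V E (x # y # ys) \<longleftrightarrow> x \<in> V \<and> (x, y) \<in> E \<and> walk V E (y # ys)"
proof
  assume h: "walk V E (x # y # ys)"
  have h2: "\<forall>i. Suc i < length (x # y # ys) \<longrightarrow> ((x # y # ys) ! i, (x # y # ys) ! Suc i) \<in> E"
    using h unfolding walk_def by blast
  have "(x, y) \<in> E" using h2[rule_format, of 0] by simp
  moreover have "\<forall>i. Suc i < length (y # ys) \<longrightarrow> ((y # ys) ! i, (y # ys) ! Suc i) \<in> E"
  proof (intro allI impI)
    fix i assume "Suc i < length (y # ys)"
    then show "((y # ys) ! i, (y # ys) ! Suc i) \<in> E" using h2[rule_format, of "Suc i"] by simp
  qed
  ultimately show "x \<in> V \<and> (x, y) \<in> E \<and> walk V E (y # ys)" using h unfolding walk_def by simp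
next
  assume h: "x \<in> V \<and> (x, y) \<in> E \<and> walk V E (y # ys)"
  have "\<forall>i. Suc i < length (x # y # ys) \<longrightarrow> ((x # y # ys) ! i, (x # y # ys) ! Suc i) \<in> E"
  proof (intro allI impI)
    fix i assume i: "Suc i < length (x # y # ys)"
    show "((x # y # ys) ! i, (x # y # ys) ! Suc i) \<in> E"
    proof (cases i)
      case 0 then show ?thesis using h by simp
    next
      case (Suc j) then show ?thesis using h i unfolding walk_def by simp
    qed
  qed
  then show "walk V E (x # y # ys)" using h unfolding walk_def by simp
qed

lemma wlk_0: "wlk V E x y 0 \<longleftrightarrow> x = y \<and> x \<in> V"
  unfolding wlk_def
proof
  assume "\<exists>xs. walk V E xs \<and> hd xs = x \<and> last xs = y \<and> length xs = Suc 0"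
  then show "x = y \<and> x \<in> V" by (auto simp: length_Suc_conv walk_def)
next
  assume "x = y \<and> x \<in> V"
  then show "\<exists>xs. walk V E xs \<and> hd xs = x \<and> last xs = y \<and> length xs = Suc 0"
    by (intro exI[of _ "[x]"]) (auto simp: walk_def)
qed

lemma wlk_Suc: "wlk V E x y (Suc k) \<longleftrightarrow> x \<in> V \<and> (\<exists>z. (x,z) \<in> E \<and> wlk V E z y k)"
proof
  assume "wlk V E x y (Suc k)"
  then obtain xs where xs: "walk V E xs" "hd xs = x" "last xs = y" "length xs = Suc (Suc k)"
    unfolding wlk_def by blast
  then obtain z ys where zs: "xs = x # z # ys" by (auto simp: length_Suc_conv)
  have "wlk V E z y k" unfolding wlk_def
    using xs zs by (intro exI[of _ "z # ys"]) (auto simp: walk_cons2)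
  then show "x \<in> V \<and> (\<exists>z. (x,z) \<in> E \<and> wlk V E z y k)"
    using xs zs by (auto simp: walk_cons2)
next
  assume "x \<in> V \<and> (\<exists>z. (x,z) \<in> E \<and> wlk V E z y k)"
  then obtain z zs where h: "x \<in> V" "(x,z) \<in> E" "walk V E zs" "hd zs = z" "last zs = y" "length zs = Suc k"
    unfolding wlk_def by blast
  then obtain ys where "zs = z # ys" by (cases zs) auto
  with h show "wlk V E x y (Suc k)" unfolding wlk_def
    by (intro exI[of _ "x # zs"]) (auto simp: walk_cons2)
qed

lemma wlk_trans: "wlk V E x y k \<Longrightarrow> wlk V E y z l \<Longrightarrow> wlk V E x z (k + l)"
proof (induction k arbitrary: x)
  case 0 then show ?case by (simp add: wlk_0)
next
  case (Suc k)
  then obtain w where "x \<in> V" "(x,w) \<in> E" "wlk V E w y k" by (auto simp: wlk_Suc)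
  with Suc.IH[of w] Suc.prems(2) show ?case by (auto simp: wlk_Suc)
qed

lemma wlk_sym:
  assumes "sym E" "E \<subseteq> V \<times> V"
  shows "wlk V E x y k \<Longrightarrow> wlk V E y x k"
proof (induction k arbitrary: x)
  case 0 then show ?case by (auto simp add: wlk_0)
next
  case (Suc k)
  then obtain w where w: "x \<in> V" "(x,w) \<in> E" "wlk V E w y k" by (auto simp: wlk_Suc)
  have 1: "wlk V E y w k" using Suc.IH w(3) .
  have "(w,x) \<in> E" using assms(1) w(2) by (rule symD)
  moreover have "w \<in> V" using assms(2) w(2) by auto
  ultimately have "wlk V E w x (Suc 0)" using w(1) by (auto simp: wlk_Suc wlk_0)
  from wlk_trans[OF 1 this] show ?case by simp
qed

lemma wlk_bound:
  fixes h :: "'a \<Rightarrow> int"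
  assumes "\<And>a b. (a,b) \<in> E \<Longrightarrow> \<bar>h a - h b\<bar> \<le> 1"
  shows "wlk V E x y k \<Longrightarrow> \<bar>h x - h y\<bar> \<le> int k"
proof (induction k arbitrary: x)
  case 0 then show ?case by (simp add: wlk_0)
next
  case (Suc k)
  then obtain w where "(x,w) \<in> E" "wlk V E w y k" by (auto simp: wlk_Suc)
  with Suc.IH[of w] assms[of x w] show ?case by arith
qed

lemma wlk_auto:
  assumes "automorphism V E f" "E \<subseteq> V \<times> V"
  shows "wlk V E x y k \<Longrightarrow> wlk V E (f x) (f y) k"
proof (induction k arbitrary: x)
  case 0 then show ?case using assms(1) by (auto simp: wlk_0 automorphism_def bij_betw_def)
next
  case (Suc k)
  then obtain w where w: "x \<in> V" "(x,w) \<in> E" "wlk V E w y k" by (auto simp: wlk_Suc)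
  have "w \<in> V" using w(2) assms(2) by auto
  have "(f x, f w) \<in> E" using assms(1) w(1) \<open>w\<in>V\<close> w(2) unfolding automorphism_def by blast
  moreover have "f x \<in> V" using assms(1) w(1) by (auto simp: automorphism_def bij_betw_def)
  ultimately show ?case using Suc.IH[OF w(3)] by (auto simp: wlk_Suc)
qed

lemma auto_inv:
  assumes "automorphism V E f"
  shows "automorphism V E (inv_into V f)"
proof -
  have b: "bij_betw f V V" using assms by (simp add: automorphism_def)
  have bi: "bij_betw (inv_into V f) V V" using bij_betw_inv_into[OF b] .
  have "\<forall>x\<in>V. \<forall>y\<in>V. (x, y) \<in> E \<longleftrightarrow> (inv_into V f x, inv_into V f y) \<in> E"
  proof (intro ballI)
    fix x y assume xy: "x \<in> V" "y \<in> V"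
    have gx: "inv_into V f x \<in> V" "inv_into V f y \<in> V" using bi xy by (auto intro: bij_betw_apply)
    have fx: "f (inv_into V f x) = x" "f (inv_into V f y) = y"
      using b xy by (auto intro: f_inv_into_f simp: bij_betw_def)
    show "(x, y) \<in> E \<longleftrightarrow> (inv_into V f x, inv_into V f y) \<in> E"
      using assms gx fx unfolding automorphism_def by metis
  qed
  with bi show ?thesis by (simp add: automorphism_def)
qed


locale spider =
  fixes n N :: nat
  assumes n1: "1 \<le> n" and nN: "n + 2 \<le> N"
begin

definition P :: "nat \<Rightarrow> nat \<Rightarrow> nat" where "P a t = prod_encode (a, t)"
definition lg :: "nat \<Rightarrow> nat" where "lg v = fst (prod_decode v)"
definition dp :: "nat \<Rightarrow> nat" where "dp v = snd (prod_decode v)"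
definition L :: "nat \<Rightarrow> nat" where "L a = (if a < n then 1 else a + 2 - n)"
definition V :: "nat set" where "V = {v. v = 0 \<or> (lg v < N \<and> 1 \<le> dp v \<and> dp v \<le> L (lg v))}"
definition E :: "(nat \<times> nat) set" where
  "E = {(u,v). u \<in> V \<and> v \<in> V \<and> (lg u = lg v \<or> u = 0 \<or> v = 0) \<and> (dp u = dp v + 1 \<or> dp v = dp u + 1)}"
definition D :: "nat \<Rightarrow> nat \<Rightarrow> nat" where
  "D u v = (if lg u = lg v \<or> u = 0 \<or> v = 0 then (dp u - dp v) + (dp v - dp u) else dp u + dp v)"

lemma lg_P[simp]: "lg (P a t) = a" by (simp add: lg_def P_def)
lemma dp_P[simp]: "dp (P a t) = t" by (simp add: dp_def P_def)
lemma P_lg_dp[simp]: "P (lg v) (dp v) = v" by (simp add: P_def lg_def dp_def)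
lemma P_inj[simp]: "P a t = P b s \<longleftrightarrow> a = b \<and> t = s" by (simp add: P_def)
lemma P00: "P 0 0 = 0" by (simp add: P_def prod_encode_def)
lemma lg0[simp]: "lg 0 = 0" by (metis P00 lg_P)
lemma dp0[simp]: "dp 0 = 0" by (metis P00 dp_P)
lemma eq_iff: "u = v \<longleftrightarrow> lg u = lg v \<and> dp u = dp v" by (metis P_lg_dp)
lemma P_nz: "1 \<le> t \<Longrightarrow> P a t \<noteq> 0" by (metis dp0 dp_P not_one_le_zero)
lemma L_pos: "1 \<le> L a" by (auto simp: L_def)
lemma L_pos'[simp]: "0 < L a" by (auto simp: L_def)
lemma L_pos1[simp]: "Suc 0 \<le> L a" by (auto simp: L_def)
lemma L_nz[simp]: "L a \<noteq> 0" by (auto simp: L_def)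
lemma nz_dp: "dp v \<noteq> 0 \<Longrightarrow> v \<noteq> 0" by (metis dp0)
lemma P_eq0[simp]: "P a t = 0 \<longleftrightarrow> a = 0 \<and> t = 0" by (metis P00 P_inj)
lemma P_gt0[simp]: "0 < P a t \<longleftrightarrow> \<not> (a = 0 \<and> t = 0)" by (simp only: neq0_conv[symmetric] P_eq0)
lemma zero_V[simp]: "0 \<in> V" by (simp add: V_def)
lemma P_V: "a < N \<Longrightarrow> 1 \<le> t \<Longrightarrow> t \<le> L a \<Longrightarrow> P a t \<in> V" by (simp add: V_def)
lemma dp_pos: "v \<in> V \<Longrightarrow> v \<noteq> 0 \<Longrightarrow> 1 \<le> dp v" by (simp add: V_def)
lemma dp_le: "v \<in> V \<Longrightarrow> v \<noteq> 0 \<Longrightarrow> dp v \<le> L (lg v)" by (simp add: V_def)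
lemma lg_lt: "v \<in> V \<Longrightarrow> lg v < N" using nN by (auto simp: V_def)
lemma dp_zero: "v \<in> V \<Longrightarrow> dp v = 0 \<Longrightarrow> v = 0" by (auto simp: V_def)

lemma E_sub: "E \<subseteq> V \<times> V" by (auto simp: E_def)
lemma E_sym: "sym E" by (auto simp: E_def sym_def)
lemma E_irrefl: "irrefl E" by (auto simp: E_def irrefl_def)

lemma finite_V: "finite V"
proof -
  have "V \<subseteq> (\<lambda>(a,t). P a t) ` ({..<N} \<times> {..N+2})"
  proof
    fix v assume v: "v \<in> V"
    have "dp v \<le> N + 2"
    proof (cases "v = 0")
      case False
      then have "dp v \<le> L (lg v)" using dp_le v by simp
      moreover have "L (lg v) \<le> N + 2" using lg_lt[OF v] unfolding L_def by arith
      ultimately show ?thesis by simp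
    qed simp
    then show "v \<in> (\<lambda>(a,t). P a t) ` ({..<N} \<times> {..N+2})"
      using lg_lt[OF v] by (intro image_eqI[of _ _ "(lg v, dp v)"]) auto
  qed
  then show ?thesis by (rule finite_subset) auto
qed

abbreviation "wl \<equiv> wlk V E"

lemma E_dp: "(a,b) \<in> E \<Longrightarrow> \<bar>int (dp a) - int (dp b)\<bar> = 1" by (auto simp: E_def)

lemma lower: assumes "wl u v k" shows "D u v \<le> k"
proof (cases "lg u = lg v \<or> u = 0 \<or> v = 0")
  case True
  have "\<bar>int (dp u) - int (dp v)\<bar> \<le> int k"
    by (rule wlk_bound[of E "\<lambda>w. int (dp w)", OF _ assms]) (simp add: E_dp)
  moreover have "D u v = (dp u - dp v) + (dp v - dp u)" using True by (simp add: D_def)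
  ultimately show ?thesis by arith
next
  case False
  define h where "h w = (if lg w = lg u then int (dp w) else - int (dp w))" for w
  have "\<bar>h u - h v\<bar> \<le> int k"
  proof (rule wlk_bound[of E h, OF _ assms])
    fix a b assume ab: "(a,b) \<in> E"
    then show "\<bar>h a - h b\<bar> \<le> 1" unfolding h_def E_def by auto
  qed
  then show ?thesis using False by (simp add: D_def h_def)
qed

lemma to_center: "u \<in> V \<Longrightarrow> dp u = k \<Longrightarrow> wl u 0 k"
proof (induction k arbitrary: u)
  case 0 then show ?case using dp_zero by (simp add: wlk_0)
next
  case (Suc k)
  have u0: "u \<noteq> 0"
  proof
    assume "u = 0" then show False using Suc.prems by simp
  qed
  define u' where "u' = (if k = 0 then 0 else P (lg u) k)"
  have "dp u \<le> L (lg u)" using dp_le[OF Suc.prems(1) u0] by simp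
  then have u'V: "u' \<in> V" unfolding u'_def using Suc.prems lg_lt[of u] by (auto intro: P_V)
  have "dp u' = k" by (simp add: u'_def)
  then have "wl u' 0 k" using Suc.IH u'V by simp
  moreover have "(u, u') \<in> E" unfolding E_def using u'V Suc.prems by (auto simp: u'_def)
  ultimately show ?case using Suc.prems by (auto simp: wlk_Suc)
qed

lemma wl_sym: "wl x y k \<Longrightarrow> wl y x k" using wlk_sym[OF E_sym E_sub] .

lemma same_leg: assumes v: "v \<in> V" "v \<noteq> 0"
  shows "u \<in> V \<Longrightarrow> u \<noteq> 0 \<Longrightarrow> lg u = lg v \<Longrightarrow> dp u = dp v + k \<Longrightarrow> wl u v k"
proof (induction k arbitrary: u)
  case 0 then show ?case using v eq_iff[of u v] by (simp add: wlk_0)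
next
  case (Suc k)
  define u' where "u' = P (lg v) (dp v + k)"
  have "dp u \<le> L (lg u)" using dp_le[OF Suc.prems(1,2)] by simp
  have "1 \<le> dp v" using dp_pos v by simp
  have u'V: "u' \<in> V" unfolding u'_def
  proof (rule P_V)
    show "lg v < N" using lg_lt[OF v(1)] .
    show "1 \<le> dp v + k" using \<open>1 \<le> dp v\<close> by simp
    show "dp v + k \<le> L (lg v)" using \<open>dp u \<le> L (lg u)\<close> Suc.prems by simp
  qed
  have u'0: "u' \<noteq> 0" unfolding u'_def using \<open>1 \<le> dp v\<close> by (intro P_nz) simp
  have "wl u' v k" using Suc.IH[OF u'V u'0] by (simp add: u'_def)
  moreover have "(u, u') \<in> E" unfolding E_def using u'V Suc.prems by (auto simp: u'_def)
  ultimately show ?case using Suc.prems by (auto simp: wlk_Suc)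
qed

lemma upper: assumes "u \<in> V" "v \<in> V" shows "wl u v (D u v)"
proof -
  consider "u = 0" | "v = 0" | "u \<noteq> 0" "v \<noteq> 0" "lg u = lg v" | "u \<noteq> 0" "v \<noteq> 0" "lg u \<noteq> lg v" by blast
  then show ?thesis
  proof cases
    case 1 then show ?thesis using wl_sym[OF to_center[OF assms(2) refl]] by (simp add: D_def)
  next
    case 2 then show ?thesis using to_center[OF assms(1) refl] by (simp add: D_def)
  next
    case 3
    show ?thesis
    proof (cases "dp v \<le> dp u")
      case True
      then have "wl u v (dp u - dp v)" using same_leg[OF assms(2) 3(2) assms(1) 3(1) 3(3)] by simp
      then show ?thesis using 3 True by (simp add: D_def)
    next
      case False
      then have "wl v u (dp v - dp u)" using same_leg[OF assms(1) 3(1) assms(2) 3(2) 3(3)[symmetric]] by simp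
      then show ?thesis using 3 False wl_sym by (simp add: D_def)
    qed
  next
    case 4
    have "wl u v (dp u + dp v)"
      using wlk_trans[OF to_center[OF assms(1) refl] wl_sym[OF to_center[OF assms(2) refl]]] .
    then show ?thesis using 4 by (simp add: D_def)
  qed
qed

lemma dist_eq: "u \<in> V \<Longrightarrow> v \<in> V \<Longrightarrow> dist_G V E u v = D u v"
  unfolding dist_G_def
  using upper lower unfolding wlk_def
  by (intro Least_equality) (auto)

lemma connected: "connected_graph V E"
proof -
  have "V \<noteq> {}" using zero_V by blast
  moreover have "\<forall>x\<in>V. \<forall>y\<in>V. \<exists>xs. walk V E xs \<and> hd xs = x \<and> last xs = y"
    using upper unfolding wlk_def by blast
  ultimately show ?thesis unfolding connected_graph_def by blast
qed

lemma simple: "simple_graph V E"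
  unfolding simple_graph_def using finite_V E_sub E_sym E_irrefl by simp


lemma D_0[simp]: "D x 0 = dp x" by (simp add: D_def)

lemma aut_V: "automorphism V E f \<Longrightarrow> x \<in> V \<Longrightarrow> f x \<in> V"
  by (auto simp: automorphism_def bij_betw_def)

lemma aut_inj: "automorphism V E f \<Longrightarrow> inj_on f V"
  by (auto simp: automorphism_def bij_betw_def)

lemma D_auto_le: assumes "automorphism V E f" "x \<in> V" "y \<in> V" shows "D (f x) (f y) \<le> D x y"
  using lower[OF wlk_auto[OF assms(1) E_sub upper[OF assms(2,3)]]] .

lemma D_auto: assumes f: "automorphism V E f" and xy: "x \<in> V" "y \<in> V" shows "D (f x) (f y) = D x y"
proof -
  let ?g = "inv_into V f"
  have g: "automorphism V E ?g" using auto_inv[OF f] .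
  have "?g (f x) = x" "?g (f y) = y" using aut_inj[OF f] xy by (auto simp: inv_into_f_f)
  then have "D x y \<le> D (f x) (f y)" using D_auto_le[OF g aut_V[OF f xy(1)] aut_V[OF f xy(2)]] by simp
  with D_auto_le[OF f xy] show ?thesis by simp
qed

lemma nbr: assumes w: "w \<in> V" "w \<noteq> 0" and e: "(w,u) \<in> E"
  shows "u = (if dp w = 1 then 0 else P (lg w) (dp w - 1)) \<or> u = P (lg w) (dp w + 1)"
proof -
  have uV: "u \<in> V" and c: "lg w = lg u \<or> u = 0" and d: "dp w = dp u + 1 \<or> dp u = dp w + 1"
    using e w(2) by (auto simp: E_def)
  have dw: "1 \<le> dp w" using dp_pos w by simp
  show ?thesis
  proof (cases "u = 0")
    case True then show ?thesis using d dw by auto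
  next
    case False
    then have "lg u = lg w" "1 \<le> dp u" using c dp_pos uV by auto
    then show ?thesis using d eq_iff[of u] by auto
  qed
qed

lemma center_fixed: assumes f: "automorphism V E f" shows "f 0 = 0"
proof (rule ccontr)
  let ?w = "f 0"
  assume w: "?w \<noteq> 0"
  have wV: "?w \<in> V" using aut_V[OF f zero_V] .
  define p where "p a = P a 1" for a
  have pV: "a < N \<Longrightarrow> p a \<in> V" for a using P_V L_pos unfolding p_def by auto
  have pE: "a < N \<Longrightarrow> (0, p a) \<in> E" for a using pV by (auto simp: E_def p_def)
  have fpE: "a < N \<Longrightarrow> (?w, f (p a)) \<in> E" for a
    using f pE pV unfolding automorphism_def by (meson zero_V)
  have mem: "a < N \<Longrightarrow> f (p a) \<in> {(if dp ?w = 1 then 0 else P (lg ?w) (dp ?w - 1)), P (lg ?w) (dp ?w + 1)}" for a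
    using nbr[OF wV w fpE] by auto
  have dist: "a < N \<Longrightarrow> b < N \<Longrightarrow> a \<noteq> b \<Longrightarrow> f (p a) \<noteq> f (p b)" for a b
    using aut_inj[OF f] pV unfolding inj_on_def p_def by (metis P_inj)
  have "0 < N" "1 < N" "2 < N" using nN n1 by auto
  then show False using mem[of 0] mem[of 1] mem[of 2] dist[of 0 1] dist[of 0 2] dist[of 1 2] by auto
qed

lemma dp_auto: assumes f: "automorphism V E f" "x \<in> V" shows "dp (f x) = dp x"
  using D_auto[OF f zero_V] center_fixed[OF f(1)] by simp

lemma leaf_fixed: assumes f: "automorphism V E f" and a: "n \<le> a" "a < N"
  shows "f (P a (L a)) = P a (L a)"
proof -
  let ?l = "P a (L a)"
  let ?g = "inv_into V f"
  have g: "automorphism V E ?g" using auto_inv[OF f] .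
  have lV: "?l \<in> V" using a by (intro P_V) (auto simp: L_pos)
  have La: "L a = a + 2 - n" "2 \<le> L a" using a by (auto simp: L_def)
  define w where "w = f ?l"
  have wV: "w \<in> V" using aut_V[OF f lV] by (simp add: w_def)
  have dpw: "dp w = L a" using dp_auto[OF f lV] by (simp add: w_def)
  have w0: "w \<noteq> 0"
  proof
    assume "w = 0" then show False using dpw La by simp
  qed
  have gw: "?g w = ?l" using aut_inj[OF f] lV by (simp add: w_def inv_into_f_f)
  have leaf: "dp w = L (lg w)"
  proof (rule ccontr)
    assume "dp w \<noteq> L (lg w)"
    then have lt: "dp w < L (lg w)" using dp_le[OF wV w0] by simp
    define u where "u = P (lg w) (dp w + 1)"
    have uV: "u \<in> V" using lt lg_lt[OF wV] by (auto simp: u_def intro: P_V)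
    have Dwu: "D w u = 1" by (simp add: D_def u_def)
    have D1: "D ?l (?g u) = 1" using D_auto[OF g wV uV] gw Dwu by simp
    have dpg: "dp (?g u) = L a + 1" using dp_auto[OF g uV] dpw by (simp add: u_def)
    have guV: "?g u \<in> V" using aut_V[OF g uV] .
    have gu0: "?g u \<noteq> 0"
    proof
      assume "?g u = 0"
      then have "dp (?g u) = 0" by simp
      with dpg show False by simp
    qed
    have l0: "?l \<noteq> 0" by simp
    show False
    proof (cases "lg (?g u) = a")
      case True
      then show False using dp_le[OF guV gu0] dpg by simp
    next
      case False
      then have "D ?l (?g u) = L a + (L a + 1)" using gu0 l0 dpg by (simp add: D_def)
      then show False using D1 La by simp
    qed
  qed
  have "lg w < N" using lg_lt[OF wV] .
  have "n \<le> lg w"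
  proof (rule ccontr)
    assume "\<not> n \<le> lg w"
    then have "L (lg w) = 1" by (simp add: L_def)
    then show False using leaf dpw La by simp
  qed
  then have "lg w = a" using leaf dpw a by (simp add: L_def)
  then have "w = ?l" using dpw eq_iff[of w] by simp
  then show ?thesis by (simp add: w_def)
qed

lemma long_fixed: assumes f: "automorphism V E f" and x: "x \<in> V" "x \<noteq> 0" "n \<le> lg x"
  shows "f x = x"
proof -
  let ?a = "lg x"
  let ?l = "P ?a (L ?a)"
  have aN: "?a < N" using lg_lt[OF x(1)] .
  have lV: "?l \<in> V" using aN by (intro P_V) (auto simp: L_pos)
  have fl: "f ?l = ?l" using leaf_fixed[OF f x(3) aN] .
  define w where "w = f x"
  have wV: "w \<in> V" using aut_V[OF f x(1)] by (simp add: w_def)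
  have dpw: "dp w = dp x" using dp_auto[OF f x(1)] by (simp add: w_def)
  have dx: "1 \<le> dp x" "dp x \<le> L ?a" using dp_pos[OF x(1,2)] dp_le[OF x(1,2)] by auto
  have w0: "w \<noteq> 0"
  proof
    assume "w = 0" then show False using dpw dx by simp
  qed
  have l0: "?l \<noteq> 0" by simp
  have "D w ?l = D x ?l" using D_auto[OF f x(1) lV] fl by (simp add: w_def)
  also have "\<dots> = L ?a - dp x" using dx by (simp add: D_def)
  finally have Dw: "D w ?l = L ?a - dp x" .
  have "lg w = ?a"
  proof (rule ccontr)
    assume "lg w \<noteq> ?a"
    then have "D w ?l = dp x + L ?a" using w0 l0 dpw by (simp add: D_def)
    then show False using Dw dx by simp
  qed
  then show ?thesis using dpw eq_iff[of w x] by (simp add: w_def)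
qed

definition col :: "nat \<Rightarrow> nat" where "col v = (if lg v < n then lg v else 0)"

lemma col_dist: "distinguishing V E col"
  unfolding distinguishing_def
proof (intro allI impI ballI)
  fix f x assume fa: "automorphism V E f \<and> (\<forall>x\<in>V. col (f x) = col x)" and x: "x \<in> V"
  have f: "automorphism V E f" using fa by simp
  show "f x = x"
  proof (cases "x = 0")
    case True then show ?thesis using center_fixed[OF f] by simp
  next
    case x0: False
    show ?thesis
    proof (cases "n \<le> lg x")
      case True then show ?thesis using long_fixed[OF f x x0] by simp
    next
      case False
      define w where "w = f x"
      have wV: "w \<in> V" using aut_V[OF f x] by (simp add: w_def)
      have dpw: "dp w = dp x" using dp_auto[OF f x] by (simp add: w_def)
      have w0: "w \<noteq> 0"
  proof
    assume "w = 0" then show False using dpw dp_pos[OF x x0] by simp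
  qed
      have "lg w < n"
      proof (rule ccontr)
        assume "\<not> lg w < n"
        then have "f w = w" using long_fixed[OF f wV w0] by simp
        then have "f x = f w" by (simp add: w_def)
        then have "x = w" using aut_inj[OF f] x wV by (auto simp: inj_on_def)
        then show False using False \<open>\<not> lg w < n\<close> by simp
      qed
      moreover have "col w = col x" using fa x by (simp add: w_def)
      ultimately have "lg w = lg x" using False by (simp add: col_def)
      then show ?thesis using dpw eq_iff[of w x] by (simp add: w_def)
    qed
  qed
qed

lemma leaf_nbr: assumes "a < n" shows "(P a 1, v) \<in> E \<longleftrightarrow> v = 0" "(v, P a 1) \<in> E \<longleftrightarrow> v = 0"
proof -
  have aN: "a < N" using assms nN by simp
  have pV: "P a 1 \<in> V" using aN by (intro P_V) (auto simp: L_pos)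
  have p0: "P a 1 \<noteq> 0" by simp
  have La: "L a = 1" using assms by (simp add: L_def)
  have "(P a 1, v) \<in> E \<longleftrightarrow> v = 0"
  proof
    assume e: "(P a 1, v) \<in> E"
    show "v = 0"
    proof (rule ccontr)
      assume v0: "v \<noteq> 0"
      have vV: "v \<in> V" using e by (auto simp: E_def)
      have "lg v = a" "dp v = 2 \<or> dp v = 0" using e v0 p0 by (auto simp: E_def)
      then show False using dp_le[OF vV v0] dp_pos[OF vV v0] La by auto
    qed
  next
    assume "v = 0" then show "(P a 1, v) \<in> E" using pV by (simp add: E_def)
  qed
  moreover have "(v, P a 1) \<in> E \<longleftrightarrow> (P a 1, v) \<in> E" using E_sym by (auto simp: sym_def)
  ultimately show "(P a 1, v) \<in> E \<longleftrightarrow> v = 0" "(v, P a 1) \<in> E \<longleftrightarrow> v = 0" by auto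
qed

lemma dn_lower: assumes k: "k < n" and c: "c ` V \<subseteq> {..<k}" shows "\<not> distinguishing V E c"
proof
  assume dist: "distinguishing V E c"
  let ?T = "(\<lambda>a. P a 1) ` {..<n}"
  have TV: "?T \<subseteq> V" using nN by (auto intro!: P_V simp: L_def)
  have cardT: "card ?T = n" by (subst card_image) (auto simp: inj_on_def)
  have "c ` ?T \<subseteq> {..<k}" using TV c by auto
  then have "card (c ` ?T) \<le> k" using card_mono[of "{..<k}" "c ` ?T"] by simp
  then have "\<not> inj_on c ?T" using cardT k card_image[of c ?T] by auto
  then obtain a b where ab: "a < n" "b < n" "P a 1 \<noteq> P b 1" "c (P a 1) = c (P b 1)"
    unfolding inj_on_def by auto
  define x where "x = P a 1"
  define y where "y = P b 1"
  define f where "f v = (if v = x then y else if v = y then x else v)" for v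
  have xV: "x \<in> V" and yV: "y \<in> V" using TV ab by (auto simp: x_def y_def)
  have x0: "x \<noteq> 0" and y0: "y \<noteq> 0" by (auto simp: x_def y_def simp add: P_nz)
  have xy: "x \<noteq> y" using ab by (simp add: x_def y_def)
  have nx: "(x, v) \<in> E \<longleftrightarrow> v = 0" "(v, x) \<in> E \<longleftrightarrow> v = 0" for v using leaf_nbr[OF ab(1)] by (auto simp: x_def)
  have ny: "(y, v) \<in> E \<longleftrightarrow> v = 0" "(v, y) \<in> E \<longleftrightarrow> v = 0" for v using leaf_nbr[OF ab(2)] by (auto simp: y_def)
  have bij: "bij_betw f V V"
    by (rule bij_betw_byWitness[where f'=f]) (auto simp: f_def xV yV)
  have "\<forall>u\<in>V. \<forall>v\<in>V. (u, v) \<in> E \<longleftrightarrow> (f u, f v) \<in> E"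
    using x0 y0 xy by (auto simp: f_def nx ny)
  with bij have aut: "automorphism V E f" by (simp add: automorphism_def)
  have pres: "\<forall>v\<in>V. c (f v) = c v" using ab(4) by (auto simp: f_def x_def y_def)
  have "f x = x" using dist aut pres xV unfolding distinguishing_def by blast
  then show False using xy by (simp add: f_def)
qed

lemma dn: "distinguishing_number V E = n"
  unfolding distinguishing_number_def
proof (rule Least_equality)
  have "col ` V \<subseteq> {..<n}" using n1 by (auto simp: col_def)
  then show "\<exists>c. c ` V \<subseteq> {..<n} \<and> distinguishing V E c" using col_dist by blast
next
  fix k assume "\<exists>c. c ` V \<subseteq> {..<k} \<and> distinguishing V E c"
  then show "n \<le> k" using dn_lower by (meson not_le)
qed

lemma D_leaf: assumes x: "x \<in> V" shows
  "D x (P a (L a)) = (if x \<noteq> 0 \<and> lg x \<noteq> a then dp x + L a else L a - dp x)"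
proof -
  have l0: "P a (L a) \<noteq> 0" by simp
  show ?thesis
  proof (cases "x = 0")
    case True then show ?thesis by (simp add: D_def)
  next
    case False
    then show ?thesis using dp_le[OF x False] l0 by (auto simp: D_def)
  qed
qed

definition S0 :: "nat set" where "S0 = (\<lambda>a. P a (L a)) ` {1..<N}"

lemma S0_card: "card S0 = N - 1"
  unfolding S0_def by (subst card_image) (auto simp: inj_on_def)

lemma S0_res: "resolving V E S0"
  unfolding resolving_def
proof (intro conjI ballI impI)
  show "S0 \<subseteq> V" unfolding S0_def using P_V L_pos by auto
  fix x y assume x: "x \<in> V" and y: "y \<in> V" and xy: "x \<noteq> y"
  have N3: "3 \<le> N" using nN n1 by simp
  have key: "\<exists>a. 1 \<le> a \<and> a < N \<and> D x (P a (L a)) \<noteq> D y (P a (L a))"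
  proof -
    consider "x = 0" | "y = 0" | "x \<noteq> 0" "y \<noteq> 0" "lg x = lg y" | "x \<noteq> 0" "y \<noteq> 0" "lg x \<noteq> lg y" by blast
    then show ?thesis
    proof cases
      case 1
      then have y0: "y \<noteq> 0" using xy by simp
      define a where "a = (if lg y = 1 then 2 else (1::nat))"
      have "1 \<le> a" "a < N" "lg y \<noteq> a" using N3 by (auto simp: a_def)
      then show ?thesis using 1 y0 dp_pos[OF y y0] D_leaf[OF x] D_leaf[OF y]
        by (intro exI[of _ a]) auto
    next
      case 2
      then have x0: "x \<noteq> 0" using xy by simp
      define a where "a = (if lg x = 1 then 2 else (1::nat))"
      have "1 \<le> a" "a < N" "lg x \<noteq> a" using N3 by (auto simp: a_def)
      then show ?thesis using 2 x0 dp_pos[OF x x0] D_leaf[OF x] D_leaf[OF y]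
        by (intro exI[of _ a]) auto
    next
      case 3
      then have d: "dp x \<noteq> dp y" using xy eq_iff[of x y] by auto
      show ?thesis
      proof (cases "lg x = 0")
        case True
        then show ?thesis using 3 d N3 D_leaf[OF x, of 1] D_leaf[OF y, of 1]
          by (intro exI[of _ 1]) auto
      next
        case False
        then show ?thesis using 3 d lg_lt[OF x] D_leaf[OF x, of "lg x"] D_leaf[OF y, of "lg x"]
            dp_le[OF x 3(1)] dp_le[OF y 3(2)]
          by (intro exI[of _ "lg x"]) auto
      qed
    next
      case 4
      have dx: "1 \<le> dp x" "1 \<le> dp y" using dp_pos x y 4 by auto
      show ?thesis
      proof (cases "lg x = 0")
        case True
        then have "lg y \<noteq> 0" using 4 by simp
        then show ?thesis using 4 dx lg_lt[OF y] D_leaf[OF x, of "lg y"] D_leaf[OF y, of "lg y"]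
          by (intro exI[of _ "lg y"]) auto
      next
        case False
        then show ?thesis using 4 dx lg_lt[OF x] D_leaf[OF x, of "lg x"] D_leaf[OF y, of "lg x"]
          by (intro exI[of _ "lg x"]) auto
      qed
    qed
  qed
  then obtain a where a: "1 \<le> a" "a < N" "D x (P a (L a)) \<noteq> D y (P a (L a))" by blast
  have "P a (L a) \<in> V" using a L_pos by (intro P_V) auto
  then have "dist_G V E x (P a (L a)) \<noteq> dist_G V E y (P a (L a))" using a x y dist_eq by simp
  moreover have "P a (L a) \<in> S0" using a unfolding S0_def by auto
  ultimately show "\<exists>s\<in>S0. dist_G V E x s \<noteq> dist_G V E y s" by blast
qed

lemma res_lower: assumes S: "resolving V E S" shows "N - 1 \<le> card S"
proof -
  have SV: "S \<subseteq> V" using S by (simp add: resolving_def)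
  have fin: "finite S" using finite_subset[OF SV finite_V] .
  let ?A = "lg ` (S - {0})"
  have hit: "a \<in> ?A \<or> b \<in> ?A" if ab: "a < N" "b < N" "a \<noteq> b" for a b
  proof (rule ccontr)
    assume nh: "\<not> (a \<in> ?A \<or> b \<in> ?A)"
    have pV: "P a 1 \<in> V" "P b 1 \<in> V" using ab L_pos P_V by auto
    have ne: "P a 1 \<noteq> P b 1" using ab by simp
    obtain s where s: "s \<in> S" "dist_G V E (P a 1) s \<noteq> dist_G V E (P b 1) s"
      using S pV ne unfolding resolving_def by blast
    have sV: "s \<in> V" using s SV by auto
    have p0: "P a 1 \<noteq> 0" "P b 1 \<noteq> 0" by (auto simp add: P_nz)
    have "D (P a 1) s = D (P b 1) s"
    proof (cases "s = 0")
      case True then show ?thesis by (simp add: D_def)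
    next
      case False
      then have "lg s \<noteq> a" "lg s \<noteq> b" using nh s(1) by (auto simp: image_iff)
      then show ?thesis using False p0 by (simp add: D_def)
    qed
    then show False using s(2) dist_eq pV sV by simp
  qed
  have finA: "finite ?A" using fin by simp
  have "card ({..<N} - ?A) \<le> Suc 0"
    using hit by (subst card_le_Suc0_iff_eq) auto
  moreover have "card {..<N} \<le> card ({..<N} - ?A) + card ?A"
  proof -
    have "{..<N} \<subseteq> ({..<N} - ?A) \<union> ?A" by blast
    then have "card {..<N} \<le> card (({..<N} - ?A) \<union> ?A)" using finA by (intro card_mono) auto
    also have "\<dots> \<le> card ({..<N} - ?A) + card ?A" by (rule card_Un_le)
    finally show ?thesis .
  qed
  moreover have "card ?A \<le> card S"
  proof -
    have "card ?A \<le> card (S - {0})" using fin by (intro card_image_le) simp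
    also have "\<dots> \<le> card S" using fin by (intro card_mono) auto
    finally show ?thesis .
  qed
  ultimately show ?thesis by simp
qed

lemma md: "metric_dim V E = N - 1"
  unfolding metric_dim_def
proof (rule Least_equality)
  show "\<exists>S. resolving V E S \<and> card S = N - 1" using S0_res S0_card by blast
next
  fix k assume "\<exists>S. resolving V E S \<and> card S = k"
  then show "N - 1 \<le> k" using res_lower by blast
qed

end

theorem proposition3p4:
  fixes n m :: nat
  assumes "1 \<le> n" and "n < m"
  shows "\<exists>(V :: nat set) E. simple_graph V E \<and> connected_graph V E \<and>
           distinguishing_number V E = n \<and> metric_dim V E = m"
proof -
  interpret spider n "m + 1" using assms by unfold_locales auto
  show ?thesis using simple connected dn md by (intro exI[of _ V] exI[of _ E]) simp
qed

end
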